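(* Let $(V,L,\varphi,E)$ be a valuation system. Let $C$ be a sublattice of $V$ and $\psi:C\to E$ a valuation such that $\psi$ extends $\varphi$ and the valuation system $(V,C,\psi,E)$ is $\Pi$-complete. Then $\varphi$ is $\Pi$-extendible and $\psi$ extends $\Pi\varphi$.
   Context: A valuation system $(V,L,\varphi,E)$ consists of: (i) a lattice $V$ which is $\sigma$-distributive, i.e. for every $a\in V$ and every sequence $(b_n)$ in $V$ whose infimum exists, $\bigwedge_n(a\vee b_n)$ exists and equals $a\vee\bigwedge_n b_n$, and dually for suprema; (ii) a sublattice $L$ of $V$; (iii) a partially ordered abelian group $E$ which is R-complete: whenever $x_1\ge x_2\ge\cdots$ and $y_1\ge y_2\ge\cdots$ in $E$ are such that $\bigwedge_n(x_n+y_n)$ exists, then $\bigwedge_n x_n$ and $\bigwedge_n y_n$ exist, and dually for increasing sequences and suprema; (iv) a valuation $\varphi:L\to E$, i.e. an order-preserving map with $\varphi(a\wedge b)+\varphi(a\vee b)=\varphi(a)+\varphi(b)$. A map $\psi:C\to E$ extends $\varphi:L\to E$ if $L\subseteq C$ and $\psi|_L=\varphi$. A decreasing sequence $a_1\ge a_2\ge\cdots$ in $L$ is $\varphi$-convergent if $\bigwedge_n a_n$ exists in $V$ and $\bigwedge_n\varphi(a_n)$ exists in $E$. The system is $\Pi$-complete if for every $\varphi$-convergent decreasing sequence $(a_n)$ in $L$ we have $\bigwedge_n a_n\in L$ and $\varphi(\bigwedge_n a_n)=\bigwedge_n\varphi(a_n)$. Let $\Pi L:=\{\bigwedge_n a_n: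 (a_n)\text{ a }\varphi\text{-convergent decreasing sequence in }L\}$ (a sublattice of $V$). $\varphi$ is $\Pi$-extendible if there is a valuation $\Pi\varphi:\Pi L\to E$ with $\Pi\varphi(\bigwedge_n a_n)=\bigwedge_n\varphi(a_n)$ for every $\varphi$-convergent decreasing sequence $(a_n)$ in $L$. *)

theory Defs
  imports Complex_Main
begin

definition is_glb :: "'a::order set \<Rightarrow> 'a \<Rightarrow> bool" where
  "is_glb S x \<longleftrightarrow> (\<forall>s\<in>S. x \<le> s) \<and> (\<forall>y. (\<forall>s\<in>S. y \<le> s) \<longrightarrow> y \<le> x)"

definition is_lub :: "'a::order set \<Rightarrow> 'a \<Rightarrow> bool" where
  "is_lub S x \<longleftrightarrow> (\<forall>s\<in>S. s \<le> x) \<and> (\<forall>y. (\<forall>s\<in>S. s \<le> y) \<longrightarrow> x \<le> y)"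

definition has_glb :: "'a::order set \<Rightarrow> bool" where
  "has_glb S \<longleftrightarrow> (\<exists>x. is_glb S x)"

definition has_lub :: "'a::order set \<Rightarrow> bool" where
  "has_lub S \<longleftrightarrow> (\<exists>x. is_lub S x)"

definition sigma_distributive :: "'v::lattice itself \<Rightarrow> bool" where
  "sigma_distributive (t::'v itself) \<longleftrightarrow>
     (\<forall>(a::'v) (b::nat \<Rightarrow> 'v) i. is_glb (range b) i \<longrightarrow> is_glb (range (\<lambda>n. sup a (b n))) (sup a i)) \<and>
     (\<forall>(a::'v) (b::nat \<Rightarrow> 'v) s. is_lub (range b) s \<longrightarrow> is_lub (range (\<lambda>n. inf a (b n))) (inf a s))"

definition R_complete :: "'e::ordered_ab_group_add itself \<Rightarrow> bool" where
  "R_complete (t::'e itself) \<longleftrightarrow>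
     (\<forall>(x::nat \<Rightarrow> 'e) y. decseq x \<longrightarrow> decseq y \<longrightarrow> has_glb (range (\<lambda>n. x n + y n))
        \<longrightarrow> has_glb (range x) \<and> has_glb (range y)) \<and>
     (\<forall>(x::nat \<Rightarrow> 'e) y. incseq x \<longrightarrow> incseq y \<longrightarrow> has_lub (range (\<lambda>n. x n + y n))
        \<longrightarrow> has_lub (range x) \<and> has_lub (range y))"

definition sublattice :: "'v::lattice set \<Rightarrow> bool" where
  "sublattice L \<longleftrightarrow> (\<forall>a\<in>L. \<forall>b\<in>L. inf a b \<in> L \<and> sup a b \<in> L)"

text \<open>A valuation on L (values outside L are irrelevant).\<close>
definition valuation :: "'v::lattice set \<Rightarrow> ('v \<Rightarrow> 'e::ordered_ab_group_add) \<Rightarrow> bool" where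
  "valuation L \<phi> \<longleftrightarrow>
     (\<forall>a\<in>L. \<forall>b\<in>L. a \<le> b \<longrightarrow> \<phi> a \<le> \<phi> b) \<and>
     (\<forall>a\<in>L. \<forall>b\<in>L. \<phi> (inf a b) + \<phi> (sup a b) = \<phi> a + \<phi> b)"

definition valuation_system :: "'v::lattice set \<Rightarrow> ('v \<Rightarrow> 'e::ordered_ab_group_add) \<Rightarrow> bool" where
  "valuation_system L \<phi> \<longleftrightarrow>
     sigma_distributive TYPE('v) \<and> sublattice L \<and> R_complete TYPE('e) \<and> valuation L \<phi>"

definition extends :: "('v \<Rightarrow> 'e) \<Rightarrow> 'v set \<Rightarrow> ('v \<Rightarrow> 'e) \<Rightarrow> 'v set \<Rightarrow> bool" where
  "extends \<psi> C \<phi> L \<longleftrightarrow> L \<subseteq> C \<and> (\<forall>x\<in>L. \<psi> x = \<phi> x)"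

definition phi_convergent :: "'v::lattice set \<Rightarrow> ('v \<Rightarrow> 'e::ordered_ab_group_add) \<Rightarrow> (nat \<Rightarrow> 'v) \<Rightarrow> bool" where
  "phi_convergent L \<phi> a \<longleftrightarrow>
     (\<forall>n. a n \<in> L) \<and> decseq a \<and> has_glb (range a) \<and> has_glb (range (\<lambda>n. \<phi> (a n)))"

definition Pi_complete :: "'v::lattice set \<Rightarrow> ('v \<Rightarrow> 'e::ordered_ab_group_add) \<Rightarrow> bool" where
  "Pi_complete L \<phi> \<longleftrightarrow>
     (\<forall>a i. phi_convergent L \<phi> a \<longrightarrow> is_glb (range a) i \<longrightarrow>
        i \<in> L \<and> is_glb (range (\<lambda>n. \<phi> (a n))) (\<phi> i))"

definition PiL :: "'v::lattice set \<Rightarrow> ('v \<Rightarrow> 'e::ordered_ab_group_add) \<Rightarrow> 'v set" where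
  "PiL L \<phi> = {i. \<exists>a. phi_convergent L \<phi> a \<and> is_glb (range a) i}"

definition Pi_extension :: "'v::lattice set \<Rightarrow> ('v \<Rightarrow> 'e::ordered_ab_group_add) \<Rightarrow> ('v \<Rightarrow> 'e) \<Rightarrow> bool" where
  "Pi_extension L \<phi> \<chi> \<longleftrightarrow> valuation (PiL L \<phi>) \<chi> \<and>
     (\<forall>a i. phi_convergent L \<phi> a \<longrightarrow> is_glb (range a) i \<longrightarrow>
        is_glb (range (\<lambda>n. \<phi> (a n))) (\<chi> i))"

definition Pi_extendible :: "'v::lattice set \<Rightarrow> ('v \<Rightarrow> 'e::ordered_ab_group_add) \<Rightarrow> bool" where
  "Pi_extendible L \<phi> \<longleftrightarrow> (\<exists>\<chi>. Pi_extension L \<phi> \<chi>)"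

end

theory Submission
  imports Defs
begin

lemma glb_unique: "is_glb S x \<Longrightarrow> is_glb S y \<Longrightarrow> x = (y::'a::order)"
  unfolding is_glb_def by (meson order_antisym)

theorem lemma5p5:
  fixes L C :: "'v::lattice set" and \<phi> \<psi> :: "'v \<Rightarrow> 'e::ordered_ab_group_add"
  assumes "valuation_system L \<phi>"
    and "sublattice C" and "valuation C \<psi>"
    and "extends \<psi> C \<phi> L"
    and "Pi_complete C \<psi>"
  shows "Pi_extendible L \<phi> \<and>
         (\<forall>\<chi>. Pi_extension L \<phi> \<chi> \<longrightarrow> extends \<psi> C \<chi> (PiL L \<phi>))"
proof -
  have LC: "L \<subseteq> C" and eq: "\<And>x. x \<in> L \<Longrightarrow> \<psi> x = \<phi> x"
    using assms(4) unfolding extends_def by auto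
  have key: "i \<in> C \<and> is_glb (range (\<lambda>n. \<phi> (a n))) (\<psi> i)"
    if pc: "phi_convergent L \<phi> a" and g: "is_glb (range a) i" for a i
  proof -
    have aL: "\<forall>n. a n \<in> L" using pc unfolding phi_convergent_def by auto
    have fe: "(\<lambda>n. \<psi> (a n)) = (\<lambda>n. \<phi> (a n))" using aL eq by auto
    have "phi_convergent C \<psi> a" using pc aL LC unfolding phi_convergent_def fe by auto
    then show ?thesis using assms(5) g fe unfolding Pi_complete_def by metis
  qed
  have sub: "PiL L \<phi> \<subseteq> C" using key unfolding PiL_def by auto
  have ext: "Pi_extension L \<phi> \<psi>"
    unfolding Pi_extension_def
  proof
    show "valuation (PiL L \<phi>) \<psi>" using assms(3) sub unfolding valuation_def by blast
    show "\<forall>a i. phi_convergent L \<phi> a \<longrightarrow> is_glb (range a) i \<longrightarrow>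
        is_glb (range (\<lambda>n. \<phi> (a n))) (\<psi> i)" using key by blast
  qed
  have "extends \<psi> C \<chi> (PiL L \<phi>)" if "Pi_extension L \<phi> \<chi>" for \<chi>
    unfolding extends_def
  proof (intro conjI ballI sub)
    fix x assume "x \<in> PiL L \<phi>"
    then obtain a where a: "phi_convergent L \<phi> a" "is_glb (range a) x" unfolding PiL_def by auto
    have "is_glb (range (\<lambda>n. \<phi> (a n))) (\<chi> x)" using that a unfolding Pi_extension_def by blast
    moreover have "is_glb (range (\<lambda>n. \<phi> (a n))) (\<psi> x)" using key a by blast
    ultimately show "\<psi> x = \<chi> x" using glb_unique by metis
  qed
  then show ?thesis using ext unfolding Pi_extendible_def by blast
qed

end
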